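(* There exist a connected graph $G$ of order $n\geq 2$ and a graph $H$ with connected components $H_1,\dots,H_k$ such that $\chi_L(G\odot H)=\max\{\chi_L(H_t+K_1)\mid 1\leq t\leq k\}$.
   Context: All graphs are finite and simple. A $k$-coloring of a connected graph $G$ is a map $c:V(G)\to\{1,\dots,k\}$ with $c(u)\neq c(v)$ for adjacent $u,v$; it induces the partition $\Pi=\{C_1,\dots,C_k\}$ into color classes $C_i=c^{-1}(i)$. The color code of $v$ is $c_\Pi(v)=(d(v,C_1),\dots,d(v,C_k))$ with $d(v,C_i)=\min\{d(v,x): x\in C_i\}$ (graph distance). $c$ is a locating coloring if distinct vertices have distinct color codes; the locating-chromatic number $\chi_L(G)$ is the least $k$ for which a locating $k$-coloring exists. The corona product $G\odot H$ of a graph $G$ with vertex set $\{a_1,\dots,a_n\}$ and a graph $H$ is obtained from one copy of $G$ and $n$ disjoint copies of $H$ by joining $a_i$ to every vertex of the $i$-th copy of $H$. For a graph $F$, $F+K_1$ denotes the join of $F$ with a single new vertex adjacent to all vertices of $F$. *)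

theory Defs
  imports Main
begin

definition graph :: "'a set \<Rightarrow> ('a \<Rightarrow> 'a \<Rightarrow> bool) \<Rightarrow> bool" where
  "graph V E \<longleftrightarrow> finite V \<and>
     (\<forall>u v. E u v \<longrightarrow> u \<in> V \<and> v \<in> V \<and> u \<noteq> v \<and> E v u)"

definition walk :: "'a set \<Rightarrow> ('a \<Rightarrow> 'a \<Rightarrow> bool) \<Rightarrow> 'a list \<Rightarrow> bool" where
  "walk V E xs \<longleftrightarrow> xs \<noteq> [] \<and> set xs \<subseteq> V \<and>
     (\<forall>i. Suc i < length xs \<longrightarrow> E (xs ! i) (xs ! Suc i))"

definition connected_graph :: "'a set \<Rightarrow> ('a \<Rightarrow> 'a \<Rightarrow> bool) \<Rightarrow> bool" where
  "connected_graph V E \<longleftrightarrow> V \<noteq> {} \<and>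
     (\<forall>u\<in>V. \<forall>v\<in>V. \<exists>xs. walk V E xs \<and> hd xs = u \<and> last xs = v)"

definition gdist :: "'a set \<Rightarrow> ('a \<Rightarrow> 'a \<Rightarrow> bool) \<Rightarrow> 'a \<Rightarrow> 'a \<Rightarrow> nat" where
  "gdist V E u v = (LEAST n. \<exists>xs. walk V E xs \<and> hd xs = u \<and> last xs = v \<and> length xs = Suc n)"

definition setdist :: "'a set \<Rightarrow> ('a \<Rightarrow> 'a \<Rightarrow> bool) \<Rightarrow> 'a \<Rightarrow> 'a set \<Rightarrow> nat" where
  "setdist V E v C = Min (gdist V E v ` C)"

definition color_code :: "'a set \<Rightarrow> ('a \<Rightarrow> 'a \<Rightarrow> bool) \<Rightarrow> nat \<Rightarrow> ('a \<Rightarrow> nat) \<Rightarrow> 'a \<Rightarrow> nat list" where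
  "color_code V E k c v = map (\<lambda>i. setdist V E v {x \<in> V. c x = i}) [1..<Suc k]"

definition locating_coloring :: "'a set \<Rightarrow> ('a \<Rightarrow> 'a \<Rightarrow> bool) \<Rightarrow> nat \<Rightarrow> ('a \<Rightarrow> nat) \<Rightarrow> bool" where
  "locating_coloring V E k c \<longleftrightarrow> c ` V = {1..k} \<and>
     (\<forall>u\<in>V. \<forall>v\<in>V. E u v \<longrightarrow> c u \<noteq> c v) \<and>
     inj_on (color_code V E k c) V"

definition chi_L :: "'a set \<Rightarrow> ('a \<Rightarrow> 'a \<Rightarrow> bool) \<Rightarrow> nat" where
  "chi_L V E = (LEAST k. \<exists>c. locating_coloring V E k c)"

text \<open>Corona product G \<odot> H: vertices Inl a (a in G) and Inr (a,h) (copy of h attached to a).\<close>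
definition corona_V :: "'a set \<Rightarrow> 'b set \<Rightarrow> ('a + 'a \<times> 'b) set" where
  "corona_V VG VH = Inl ` VG \<union> Inr ` (VG \<times> VH)"

fun corona_E :: "('a \<Rightarrow> 'a \<Rightarrow> bool) \<Rightarrow> ('b \<Rightarrow> 'b \<Rightarrow> bool) \<Rightarrow> 'b set
     \<Rightarrow> ('a + 'a \<times> 'b) \<Rightarrow> ('a + 'a \<times> 'b) \<Rightarrow> bool" where
  "corona_E EG EH VH (Inl a) (Inl b) = EG a b"
| "corona_E EG EH VH (Inr (a, h)) (Inr (b, h')) = (a = b \<and> EH h h')"
| "corona_E EG EH VH (Inl a) (Inr (b, h)) = (a = b \<and> h \<in> VH)"
| "corona_E EG EH VH (Inr (b, h)) (Inl a) = (a = b \<and> h \<in> VH)"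

definition component :: "'a set \<Rightarrow> ('a \<Rightarrow> 'a \<Rightarrow> bool) \<Rightarrow> 'a \<Rightarrow> 'a set" where
  "component V E v = {u \<in> V. \<exists>xs. walk V E xs \<and> hd xs = v \<and> last xs = u}"

definition components :: "'a set \<Rightarrow> ('a \<Rightarrow> 'a \<Rightarrow> bool) \<Rightarrow> 'a set set" where
  "components V E = component V E ` V"

text \<open>F + K_1 for the subgraph of (V,E) induced by S: new apex vertex None.\<close>
definition cone_V :: "'a set \<Rightarrow> 'a option set" where
  "cone_V S = insert None (Some ` S)"

fun cone_E :: "('a \<Rightarrow> 'a \<Rightarrow> bool) \<Rightarrow> 'a set \<Rightarrow> 'a option \<Rightarrow> 'a option \<Rightarrow> bool" where
  "cone_E E S (Some a) (Some b) = (a \<in> S \<and> b \<in> S \<and> E a b)"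
| "cone_E E S None (Some b) = (b \<in> S)"
| "cone_E E S (Some a) None = (a \<in> S)"
| "cone_E E S None None = False"

end

theory Submission
  imports Defs
begin

definition reach where "reach V E u v \<longleftrightarrow> (\<exists>xs. walk V E xs \<and> hd xs = u \<and> last xs = v)"

lemma reach_refl: "u \<in> V \<Longrightarrow> reach V E u u"
  unfolding reach_def walk_def by (rule exI[of _ "[u]"]) auto

lemma reach_cons: assumes "E u v" "u \<in> V" "reach V E v w" shows "reach V E u w"
proof -
  from assms(3) obtain xs where xs: "walk V E xs" "hd xs = v" "last xs = w" unfolding reach_def by blast
  have "walk V E (u # xs)"
    unfolding walk_def
  proof (intro conjI allI impI)
    show "u#xs \<noteq> []" by simp
    show "set (u#xs) \<subseteq> V" using xs(1) assms(2) unfolding walk_def by auto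
    fix i assume i: "Suc i < length (u#xs)"
    show "E ((u#xs)!i) ((u#xs)!Suc i)"
    proof (cases i)
      case 0 then show ?thesis using xs assms(1) unfolding walk_def by (auto simp: hd_conv_nth)
    next
      case (Suc j) then show ?thesis using xs(1) i unfolding walk_def by auto
    qed
  qed
  moreover have "last (u#xs) = w" using xs walk_def by auto
  ultimately show ?thesis unfolding reach_def by (intro exI[of _ "u#xs"]) auto
qed

lemma reach_rtranclp: assumes "(\<lambda>x y. E x y \<and> x \<in> V \<and> y \<in> V)\<^sup>*\<^sup>* u v" "v \<in> V" shows "reach V E u v"
  using assms by (induction rule: converse_rtranclp_induct) (auto intro: reach_refl reach_cons)

lemma conn_hub:
  assumes "\<And>x. x \<in> V \<Longrightarrow> (\<lambda>x y. E x y \<and> x \<in> V \<and> y \<in> V)\<^sup>*\<^sup>* x h \<and> (\<lambda>x y. E x y \<and> x \<in> V \<and> y \<in> V)\<^sup>*\<^sup>* h x"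
  shows "\<forall>u\<in>V. \<forall>v\<in>V. reach V E u v"
proof (intro ballI)
  fix u v assume "u \<in> V" "v \<in> V"
  then have "(\<lambda>x y. E x y \<and> x \<in> V \<and> y \<in> V)\<^sup>*\<^sup>* u v"
    using assms rtranclp_trans[of "\<lambda>x y. E x y \<and> x \<in> V \<and> y \<in> V" u h v] by blast
  then show "reach V E u v" using \<open>v \<in> V\<close> by (rule reach_rtranclp)
qed

lemma conn_hub2:
  assumes sym: "\<forall>x\<in>V. \<forall>y\<in>V. E x y \<longrightarrow> E y x" and h: "h \<in> V"
    and d: "\<forall>x\<in>V. x = h \<or> E x h \<or> (\<exists>y\<in>V. E x y \<and> E y h)"
  shows "\<forall>u\<in>V. \<forall>v\<in>V. reach V E u v"
proof (rule conn_hub)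
  fix x assume x: "x \<in> V"
  let ?R = "\<lambda>x y. E x y \<and> x \<in> V \<and> y \<in> V"
  from d x consider "x = h" | "E x h" | y where "y \<in> V" "E x y" "E y h" by blast
  then show "?R\<^sup>*\<^sup>* x h \<and> ?R\<^sup>*\<^sup>* h x"
  proof cases
    case 1 then show ?thesis by simp
  next
    case 2 then have "?R x h" "?R h x" using sym x h by auto
    then show ?thesis by auto
  next
    case 3 then have a: "?R x y" and b: "?R y h" and c: "?R h y" and e: "?R y x" using sym x h by auto
    have "?R\<^sup>*\<^sup>* x h" using converse_rtranclp_into_rtranclp[of ?R, OF a r_into_rtranclp[of ?R, OF b]] .
    moreover have "?R\<^sup>*\<^sup>* h x" using converse_rtranclp_into_rtranclp[of ?R, OF c r_into_rtranclp[of ?R, OF e]] .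
    ultimately show ?thesis by blast
  qed
qed

lemma gdist_le: "walk V E xs \<Longrightarrow> hd xs = u \<Longrightarrow> last xs = v \<Longrightarrow> gdist V E u v \<le> length xs - 1"
  unfolding gdist_def by (rule Least_le, rule exI[of _ xs]) (auto simp: walk_def)

lemma gdist_ex: assumes "reach V E u v"
  shows "\<exists>xs. walk V E xs \<and> hd xs = u \<and> last xs = v \<and> length xs = Suc (gdist V E u v)"
proof -
  from assms obtain xs where xs: "walk V E xs" "hd xs = u" "last xs = v" unfolding reach_def by blast
  then have "length xs = Suc (length xs - 1)" by (cases xs) (auto simp: walk_def)
  with xs have "\<exists>n xs. walk V E xs \<and> hd xs = u \<and> last xs = v \<and> length xs = Suc n" by blast
  then show ?thesis unfolding gdist_def by (rule LeastI_ex)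
qed

lemma gdist_self: "u \<in> V \<Longrightarrow> gdist V E u u = 0"
  using gdist_le[of V E "[u]" u u] by (auto simp: walk_def)

lemma gdist_ge1: assumes "reach V E u v" "u \<noteq> v" shows "1 \<le> gdist V E u v"
proof (rule ccontr)
  assume "\<not> ?thesis"
  then have "gdist V E u v = 0" by simp
  with gdist_ex[OF assms(1)] obtain xs where "hd xs = u" "last xs = v" "length xs = 1" by auto
  then show False using assms(2) by (cases xs) auto
qed

lemma gdist_ge2: assumes "reach V E u v" "u \<noteq> v" "\<not> E u v" shows "2 \<le> gdist V E u v"
proof (rule ccontr)
  assume "\<not> ?thesis"
  with gdist_ge1[OF assms(1,2)] have "gdist V E u v = 1" by simp
  with gdist_ex[OF assms(1)] obtain xs where xs: "walk V E xs" "hd xs = u" "last xs = v" "length xs = 2" by auto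
  then obtain a b where "xs = [a,b]" by (cases xs; cases "tl xs") auto
  with xs have "E u v" unfolding walk_def by auto
  then show False using assms(3) by simp
qed

lemma gdist_1: assumes "E u v" "u \<in> V" "v \<in> V" "u \<noteq> v" shows "gdist V E u v = 1"
proof -
  have "walk V E [u,v]" using assms unfolding walk_def by (auto simp: less_Suc_eq)
  from gdist_le[OF this] have "gdist V E u v \<le> 1" by simp
  moreover have "reach V E u v" by (rule reach_cons[of E u v V v, OF assms(1,2) reach_refl[OF assms(3)]])
  from gdist_ge1[OF this assms(4)] have "1 \<le> gdist V E u v" .
  ultimately show ?thesis by simp
qed

lemma setdist_pat:
  assumes conn: "\<forall>u\<in>V. \<forall>w\<in>V. reach V E u w" and g: "finite V \<and> (\<forall>x\<in>V. \<not> E x x)" and v: "v \<in> V"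
    and C: "C \<subseteq> V" "C \<noteq> {}"
  shows "min (setdist V E v C) 2 = (if v \<in> C then 0 else if \<exists>x\<in>C. E v x then 1 else 2)"
proof -
  have fin: "finite C" using C g finite_subset by blast
  have irr: "\<And>x. x \<in> V \<Longrightarrow> \<not> E x x" using g by blast
  show ?thesis
  proof (cases "v \<in> C")
    case True
    then have "setdist V E v C \<le> gdist V E v v" unfolding setdist_def using fin by auto
    then show ?thesis using True gdist_self[OF v] by simp
  next
    case False
    have ge1: "\<forall>x\<in>C. 1 \<le> gdist V E v x"
    proof
      fix x assume x: "x \<in> C"
      then have "x \<in> V" "x \<noteq> v" using C False by auto
      then show "1 \<le> gdist V E v x" using conn v by (intro gdist_ge1) auto
    qed
    show ?thesis
    proof (cases "\<exists>x\<in>C. E v x")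
      case True
      then obtain x where x: "x \<in> C" "E v x" by blast
      have "x \<in> V" using x C by auto
      then have "gdist V E v x = 1" using gdist_1[of E v x V] v x irr by fastforce
      then have "setdist V E v C \<le> 1" unfolding setdist_def using fin x by (metis Min_le finite_imageI image_eqI)
      moreover have "1 \<le> setdist V E v C" unfolding setdist_def using fin C ge1 by auto
      ultimately show ?thesis using True False by simp
    next
      case nE: False
      have "\<forall>x\<in>C. 2 \<le> gdist V E v x"
      proof
        fix x assume x: "x \<in> C"
        then have "x \<in> V" "x \<noteq> v" "\<not> E v x" using C False nE by auto
        then show "2 \<le> gdist V E v x" using conn v by (intro gdist_ge2) auto
      qed
      then have "2 \<le> setdist V E v C" unfolding setdist_def using fin C by auto
      then show ?thesis using nE False by simp
    qed
  qed
qed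

lemma locating_from_pattern:
  assumes conn: "\<forall>u\<in>V. \<forall>w\<in>V. reach V E u w" and g: "finite V \<and> (\<forall>x\<in>V. \<not> E x x)"
    and im: "c ` V = {1..k}" and pr: "\<forall>u\<in>V. \<forall>v\<in>V. E u v \<longrightarrow> c u \<noteq> c v"
    and inj: "inj_on (\<lambda>v. map (\<lambda>i. if c v = i then 0::nat else if \<exists>x\<in>V. c x = i \<and> E v x then 1 else 2) [1..<Suc k]) V"
  shows "locating_coloring V E k c"
proof -
  have key: "map (\<lambda>n. min n 2) (color_code V E k c v) =
     map (\<lambda>i. if c v = i then 0::nat else if \<exists>x\<in>V. c x = i \<and> E v x then 1 else 2) [1..<Suc k]"
    if v: "v \<in> V" for v
    unfolding color_code_def map_map
  proof (rule map_cong[OF refl])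
    fix i assume "i \<in> set [1..<Suc k]"
    then have "i \<in> c ` V" using im by auto
    then have ne: "{x \<in> V. c x = i} \<noteq> {}" by auto
    show "((\<lambda>n. min n 2) \<circ> (\<lambda>i. setdist V E v {x \<in> V. c x = i})) i =
        (if c v = i then 0 else if \<exists>x\<in>V. c x = i \<and> E v x then 1 else 2)"
      using setdist_pat[OF conn g v _ ne] v by auto
  qed
  have "inj_on (color_code V E k c) V"
  proof (rule inj_onI)
    fix u v assume "u \<in> V" "v \<in> V" "color_code V E k c u = color_code V E k c v"
    then have "map (\<lambda>n. min n 2) (color_code V E k c u) = map (\<lambda>n. min n 2) (color_code V E k c v)" by simp
    then show "u = v" using key[OF \<open>u \<in> V\<close>] key[OF \<open>v \<in> V\<close>] inj \<open>u \<in> V\<close> \<open>v \<in> V\<close>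
      unfolding inj_on_def by simp
  qed
  then show ?thesis unfolding locating_coloring_def using im pr by blast
qed

definition sw :: "'a \<Rightarrow> 'a \<Rightarrow> 'a \<Rightarrow> 'a" where
  "sw a b x = (if x = a then b else if x = b then a else x)"

lemma walk_map:
  assumes "walk V E xs" "\<forall>x\<in>V. \<sigma> x \<in> V" "\<forall>x y. E (\<sigma> x) (\<sigma> y) = E x y"
  shows "walk V E (map \<sigma> xs)"
  using assms unfolding walk_def by auto

lemma gdist_inv:
  assumes inv: "\<forall>x. \<sigma> (\<sigma> x) = x" "\<forall>x\<in>V. \<sigma> x \<in> V" "\<forall>x y. E (\<sigma> x) (\<sigma> y) = E x y"
  shows "gdist V E (\<sigma> u) (\<sigma> v) = gdist V E u v"
proof -
  have 1: "\<exists>ys. walk V E ys \<and> hd ys = \<sigma> a \<and> last ys = \<sigma> b \<and> length ys = Suc n"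
    if "walk V E xs" "hd xs = a" "last xs = b" "length xs = Suc n" for xs a b n
    using that walk_map[OF that(1) inv(2,3)]
    by (intro exI[of _ "map \<sigma> xs"]) (auto simp: walk_def hd_map last_map)
  have "(\<exists>xs. walk V E xs \<and> hd xs = \<sigma> u \<and> last xs = \<sigma> v \<and> length xs = Suc n) =
        (\<exists>xs. walk V E xs \<and> hd xs = u \<and> last xs = v \<and> length xs = Suc n)" for n
    using 1[of _ "\<sigma> u" "\<sigma> v" n] 1[of _ u v n] inv(1) by metis
  then show ?thesis unfolding gdist_def by simp
qed

lemma twin:
  assumes lc: "locating_coloring V E k c" and l: "l1 \<in> V" "l2 \<in> V" "l1 \<noteq> l2"
    and aut: "\<forall>x y. E (sw l1 l2 x) (sw l1 l2 y) = E x y"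
  shows "c l1 \<noteq> c l2"
proof
  assume eq: "c l1 = c l2"
  let ?s = "sw l1 l2"
  have inv: "\<forall>x. ?s (?s x) = x" "\<forall>x\<in>V. ?s x \<in> V" using l by (auto simp: sw_def)
  have cs: "c (?s x) = c x" for x using eq by (auto simp: sw_def)
  have img: "?s ` {x \<in> V. c x = i} = {x \<in> V. c x = i}" for i
  proof -
    have "?s ` {x \<in> V. c x = i} \<subseteq> {x \<in> V. c x = i}" using inv cs by auto
    moreover have "{x \<in> V. c x = i} \<subseteq> ?s ` {x \<in> V. c x = i}"
    proof
      fix x assume "x \<in> {x \<in> V. c x = i}"
      then have "?s x \<in> {x \<in> V. c x = i}" using inv cs by auto
      then show "x \<in> ?s ` {x \<in> V. c x = i}" using inv(1) by (metis image_eqI)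
    qed
    ultimately show ?thesis by blast
  qed
  have sl: "?s l1 = l2" by (simp add: sw_def)
  have "setdist V E l2 C = setdist V E l1 C" if "?s ` C = C" for C
  proof -
    have "gdist V E l2 ` C = gdist V E l1 ` (?s ` C)"
    proof -
      have "gdist V E l2 x = gdist V E l1 (?s x)" for x
        using gdist_inv[OF inv aut, of l1 "?s x"] sl inv(1) by simp
      then show ?thesis by (auto simp: image_image)
    qed
    then show ?thesis unfolding setdist_def using that by simp
  qed
  then have "color_code V E k c l1 = color_code V E k c l2"
    unfolding color_code_def using img by simp
  then show False using lc l unfolding locating_coloring_def inj_on_def by blast
qed

lemma lb4:
  assumes lc: "locating_coloring V E k c"
    and V: "a \<in> V" "b \<in> V" "l1 \<in> V" "l2 \<in> V" "l1 \<noteq> l2"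
    and E: "E a b" "E a l1" "E b l1" "E a l2" "E b l2"
    and aut: "\<forall>x y. E (sw l1 l2 x) (sw l1 l2 y) = E x y"
  shows "4 \<le> k"
proof -
  have pr: "\<forall>u\<in>V. \<forall>v\<in>V. E u v \<longrightarrow> c u \<noteq> c v" and im: "c ` V = {1..k}"
    using lc unfolding locating_coloring_def by auto
  have d: "c l1 \<noteq> c l2" by (rule twin[OF lc V(3-5) aut])
  have "c a \<noteq> c b" "c a \<noteq> c l1" "c b \<noteq> c l1" "c a \<noteq> c l2" "c b \<noteq> c l2"
    using pr V E by auto
  with d have "card {c a, c b, c l1, c l2} = 4" by auto
  moreover have "{c a, c b, c l1, c l2} \<subseteq> {1..k}" using im V by auto
  ultimately have "4 \<le> card {1..k}" by (metis card_mono finite_atLeastAtMost)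
  then show ?thesis by simp
qed

lemma chiL_eq4:
  assumes "locating_coloring V E 4 c"
    "\<And>k c. locating_coloring V E k c \<Longrightarrow> 4 \<le> k"
  shows "chi_L V E = 4"
  unfolding chi_L_def using assms by (intro Least_equality) auto


definition EG :: "nat \<Rightarrow> nat \<Rightarrow> bool" where
  "EG x y \<longleftrightarrow> (x = 0 \<and> y = 1) \<or> (x = 1 \<and> y = 0)"
definition EH :: "nat \<Rightarrow> nat \<Rightarrow> bool" where
  "EH x y \<longleftrightarrow> (x = 0 \<and> y = 1) \<or> (x = 1 \<and> y = 0) \<or> (x = 1 \<and> y = 2) \<or> (x = 2 \<and> y = 1)"

abbreviation "VG0 \<equiv> {0,1::nat}"
abbreviation "VH0 \<equiv> {0,1,2::nat}"
abbreviation "CV \<equiv> corona_V VG0 VH0"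
abbreviation "CE \<equiv> corona_E EG EH VH0"

lemma CV_eq: "CV = {Inl 0, Inl 1, Inr(0,0), Inr(0,1), Inr(0,2), Inr(1,0), Inr(1,1), Inr(1,2)}"
  by (auto simp: corona_V_def)

lemma sp_exhaust: "(\<And>a. x = Inl a \<Longrightarrow> P) \<Longrightarrow> (\<And>a h. x = Inr (a,h) \<Longrightarrow> P) \<Longrightarrow> P"
  by (cases x) auto

lemma upt4: "[1..<Suc 4] = [1,2,3,4::nat]" by (simp add: upt_rec)
lemma at4: "{1..4::nat} = {1,2,3,4}" by auto

lemma gr_C: "finite CV \<and> (\<forall>x\<in>CV. \<not> CE x x)"
  unfolding CV_eq by (simp add: EG_def EH_def)

lemma conn_C: "\<forall>u\<in>CV. \<forall>v\<in>CV. reach CV CE u v"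
  by (rule conn_hub2[where h = "Inl 0"]) (unfold CV_eq, simp_all add: EG_def EH_def)

fun col :: "nat + nat \<times> nat \<Rightarrow> nat" where
  "col (Inl a) = (if a = 0 then 1 else 3)"
| "col (Inr (a,h)) = (if a = 0 then (if h = 0 then 3 else if h = 1 then 2 else 4)
                      else (if h = 0 then 1 else if h = 1 then 4 else 2))"

lemma loc_C: "locating_coloring CV CE 4 col"
proof (rule locating_from_pattern[OF conn_C gr_C])
  show "col ` CV = {1..4}" unfolding CV_eq at4 by (simp add: insert_commute)
  show "\<forall>u\<in>CV. \<forall>v\<in>CV. CE u v \<longrightarrow> col u \<noteq> col v" unfolding CV_eq by (simp add: EG_def EH_def)
  show "inj_on (\<lambda>v. map (\<lambda>i. if col v = i then 0::nat else if \<exists>x\<in>CV. col x = i \<and> CE v x then 1 else 2) [1..<Suc 4]) CV"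
    unfolding upt4 unfolding CV_eq by (simp add: EG_def EH_def)
qed

lemma aut_C: "\<forall>x y. CE (sw (Inr(0,0)) (Inr(0,2)) x) (sw (Inr(0,0)) (Inr(0,2)) y) = CE x y"
proof (intro allI)
  fix x y :: "nat + nat \<times> nat"
  show "CE (sw (Inr(0,0)) (Inr(0,2)) x) (sw (Inr(0,0)) (Inr(0,2)) y) = CE x y"
    by (cases x rule: sp_exhaust; cases y rule: sp_exhaust) (auto simp: sw_def EG_def EH_def)
qed

lemma chi_C: "chi_L CV CE = 4"
proof (rule chiL_eq4[OF loc_C])
  fix k c assume lc: "locating_coloring CV CE k c"
  show "4 \<le> k"
    by (rule lb4[OF lc _ _ _ _ _ _ _ _ _ _ aut_C, of "Inl 0" "Inr(0,1)"])
       (unfold CV_eq, simp_all add: EG_def EH_def)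
qed

abbreviation "KV \<equiv> cone_V VH0"
abbreviation "KE \<equiv> cone_E EH VH0"

lemma KV_eq: "KV = {None, Some 0, Some 1, Some 2}" by (auto simp: cone_V_def)

fun kc :: "nat option \<Rightarrow> nat" where
  "kc None = 1" | "kc (Some n) = (if n = 0 then 2 else if n = 1 then 3 else 4)"

lemma loc_K: "locating_coloring KV KE 4 kc"
proof (rule locating_from_pattern)
  show "\<forall>u\<in>KV. \<forall>v\<in>KV. reach KV KE u v"
    by (rule conn_hub2[where h = None]) (unfold KV_eq, simp_all add: EH_def)
  show "finite KV \<and> (\<forall>x\<in>KV. \<not> KE x x)" unfolding KV_eq by (simp add: EH_def)
  show "kc ` KV = {1..4}" unfolding KV_eq at4 by (simp add: insert_commute)
  show "\<forall>u\<in>KV. \<forall>v\<in>KV. KE u v \<longrightarrow> kc u \<noteq> kc v" unfolding KV_eq by (simp add: EH_def)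
  show "inj_on (\<lambda>v. map (\<lambda>i. if kc v = i then 0::nat else if \<exists>x\<in>KV. kc x = i \<and> KE v x then 1 else 2) [1..<Suc 4]) KV"
    unfolding upt4 unfolding KV_eq by (simp add: EH_def)
qed

lemma aut_K: "\<forall>x y. KE (sw (Some 0) (Some 2) x) (sw (Some 0) (Some 2) y) = KE x y"
proof (intro allI)
  fix x y :: "nat option"
  show "KE (sw (Some 0) (Some 2) x) (sw (Some 0) (Some 2) y) = KE x y"
    by (cases x; cases y) (auto simp: sw_def EH_def)
qed

lemma chi_K: "chi_L KV KE = 4"
proof (rule chiL_eq4[OF loc_K])
  fix k c assume lc: "locating_coloring KV KE k c"
  show "4 \<le> k"
    by (rule lb4[OF lc _ _ _ _ _ _ _ _ _ _ aut_K, of None "Some 1"])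
       (unfold KV_eq, simp_all add: EH_def)
qed

lemma comps: "components VH0 EH = {VH0}"
proof -
  have r: "\<forall>u\<in>VH0. \<forall>v\<in>VH0. reach VH0 EH u v"
    by (rule conn_hub2[where h = 1]) (auto simp: EH_def)
  have "component VH0 EH v = VH0" if "v \<in> VH0" for v
    using r that unfolding component_def reach_def by blast
  then show ?thesis unfolding components_def by auto
qed

theorem theorem2:
  shows "\<exists>(VG :: nat set) EG (VH :: nat set) EH.
     graph VG EG \<and> connected_graph VG EG \<and> card VG \<ge> 2 \<and>
     graph VH EH \<and> VH \<noteq> {} \<and>
     chi_L (corona_V VG VH) (corona_E EG EH VH) =
       Max ((\<lambda>S. chi_L (cone_V S) (cone_E EH S)) ` components VH EH)"
proof (intro exI conjI)
  show "graph VG0 EG" by (auto simp: graph_def EG_def)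
  show "graph VH0 EH" by (auto simp: graph_def EH_def)
  show "connected_graph VG0 EG"
  proof -
    have "\<forall>u\<in>VG0. \<forall>v\<in>VG0. reach VG0 EG u v"
      by (rule conn_hub2[where h = 0]) (auto simp: EG_def)
    then show ?thesis unfolding connected_graph_def reach_def by blast
  qed
  show "2 \<le> card VG0" by simp
  show "VH0 \<noteq> {}" by simp
  show "chi_L CV CE = Max ((\<lambda>S. chi_L (cone_V S) (cone_E EH S)) ` components VH0 EH)"
    unfolding comps image_insert image_empty chi_C chi_K Max_singleton by (rule refl)
qed

end
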